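(* For every $0<\delta<0.5$, every $\epsilon>0$ and every $\epsilon'>0$ there exist a domain of databases and a Bayesian inference problem (a prior and a likelihood) on it such that: (i) the mechanism that outputs a single sample from the posterior distribution $p(\theta\mid D)$ is $(\epsilon,\delta)$-differentially private; but (ii) when performing approximate sampling by running SGLD on the database, there is a number of steps $T$ such that the mechanism that outputs the SGLD iterate after $T$ iterations is not $(\epsilon'',\delta)$-differentially private for any $\epsilon''<\epsilon'$.
   Context: A randomized algorithm $M$ mapping databases to outputs is $(\epsilon,\delta)$-differentially private if for all measurable sets $S$ of outputs and all neighboring databases $D,\hat D$ (databases differing in a single record, i.e. at Hamming distance at most 1), $\Pr[M(D)\in S]\le e^{\epsilon}\Pr[M(\hat D)\in S]+\delta$. Stochastic Gradient Langevin Dynamics (SGLD) for a prior $p(\theta)$, likelihood $p(y\mid\theta)$ and database $\{y_1,\dots,y_n\}$ with batch size $b$ and step sizes $\eta_j$ starts from an initial $\theta_0$ and iterates $\theta_{j+1}=\theta_j+\frac{\eta_j}{2}\big[\nabla_\theta\ln p(\theta_j)+\frac{n}{b}\sum_{i\in B_j}\nabla_\theta\ln p(y_i\mid\theta_j)\big]+\sqrt{\eta_j}\,\xi_j$, with $\xi_j\sim\mathcal N(0,1)$ independent. The variant considered is cyclic SGLD: the database is randomly shuffled once and the samples (batch size 1) are then used cyclically in that order. *)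

theory Defs
  imports "HOL-Probability.Probability"
begin

definition neighbouring :: "'r list \<Rightarrow> 'r list \<Rightarrow> bool" where
  "neighbouring D D' \<longleftrightarrow> length D = length D' \<and>
     card {i. i < length D \<and> D ! i \<noteq> D' ! i} \<le> 1"

definition diff_private ::
  "real \<Rightarrow> real \<Rightarrow> 'r list set \<Rightarrow> ('r list \<Rightarrow> real measure) \<Rightarrow> bool" where
  "diff_private eps del Dom M \<longleftrightarrow>
     (\<forall>D\<in>Dom. \<forall>D'\<in>Dom. neighbouring D D' \<longrightarrow>
        (\<forall>S\<in>sets borel. measure (M D) S \<le> exp eps * measure (M D') S + del))"

definition post_unnorm :: "(real \<Rightarrow> real) \<Rightarrow> (real \<Rightarrow> real \<Rightarrow> real) \<Rightarrow> real list \<Rightarrow> real \<Rightarrow> real" where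
  "post_unnorm p0 lik D \<theta> = p0 \<theta> * prod_list (map (\<lambda>y. lik y \<theta>) D)"

definition posterior :: "(real \<Rightarrow> real) \<Rightarrow> (real \<Rightarrow> real \<Rightarrow> real) \<Rightarrow> real list \<Rightarrow> real measure" where
  "posterior p0 lik D =
     density lborel (\<lambda>\<theta>. ennreal (post_unnorm p0 lik D \<theta>) /
                          (\<integral>\<^sup>+ t. ennreal (post_unnorm p0 lik D t) \<partial>lborel))"

definition sgld_step ::
  "(real \<Rightarrow> real) \<Rightarrow> (real \<Rightarrow> real \<Rightarrow> real) \<Rightarrow> nat \<Rightarrow> real \<Rightarrow> real \<Rightarrow> real \<Rightarrow> real \<Rightarrow> real" where
  "sgld_step p0 lik n eta y xi \<theta> =
     \<theta> + eta / 2 * (deriv (\<lambda>t. ln (p0 t)) \<theta> + real n * deriv (\<lambda>t. ln (lik y t)) \<theta>)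
       + sqrt eta * xi"

text \<open>Iterate of cyclic SGLD: the database D is shuffled once by the
  permutation sh of {..<length D}; in step j the record D ! sh (j mod n) is used;
  xi j is the Gaussian noise of step j; eta j the step size; th0 the initial point.\<close>

fun sgld_iter ::
  "(real \<Rightarrow> real) \<Rightarrow> (real \<Rightarrow> real \<Rightarrow> real) \<Rightarrow> (nat \<Rightarrow> real) \<Rightarrow> real \<Rightarrow> real list
     \<Rightarrow> (nat \<Rightarrow> nat) \<Rightarrow> (nat \<Rightarrow> real) \<Rightarrow> nat \<Rightarrow> real" where
  "sgld_iter p0 lik eta th0 D sh xi 0 = th0"
| "sgld_iter p0 lik eta th0 D sh xi (Suc j) =
     sgld_step p0 lik (length D) (eta j) (D ! sh (j mod length D)) (xi j)
       (sgld_iter p0 lik eta th0 D sh xi j)"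

definition sgld_output ::
  "(real \<Rightarrow> real) \<Rightarrow> (real \<Rightarrow> real \<Rightarrow> real) \<Rightarrow> (nat \<Rightarrow> real) \<Rightarrow> real \<Rightarrow> nat \<Rightarrow> real list
     \<Rightarrow> real measure" where
  "sgld_output p0 lik eta th0 T D =
     distr (measure_pmf (pmf_of_set {sh. sh permutes {..<length D}})
              \<Otimes>\<^sub>M PiM {..<T} (\<lambda>_. density lborel std_normal_density))
           borel (\<lambda>(sh, xi). sgld_iter p0 lik eta th0 D sh xi T)"

definition bayes_problem :: "(real \<Rightarrow> real) \<Rightarrow> (real \<Rightarrow> real \<Rightarrow> real) \<Rightarrow> bool" where
  "bayes_problem p0 lik \<longleftrightarrow>
     p0 \<in> borel_measurable borel \<and> (\<forall>\<theta>. 0 < p0 \<theta>) \<and>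
     (\<integral>\<^sup>+ \<theta>. ennreal (p0 \<theta>) \<partial>lborel) = 1 \<and>
     (\<forall>\<theta>. (\<lambda>t. ln (p0 t)) differentiable at \<theta>) \<and>
     (\<forall>y \<theta>. 0 < lik y \<theta>) \<and>
     (\<forall>y. (\<lambda>t. lik y t) \<in> borel_measurable borel) \<and>
     (\<forall>y \<theta>. (\<lambda>t. ln (lik y t)) differentiable at \<theta>) \<and>
     (\<exists>\<nu>::real measure. sets \<nu> = sets borel \<and>
        (\<forall>\<theta>. (\<lambda>y. lik y \<theta>) \<in> borel_measurable \<nu> \<and>
              (\<integral>\<^sup>+ y. ennreal (lik y \<theta>) \<partial>\<nu>) = 1))"

end

theory Submission
  imports Defs
begin

lemma sgld_out_single:
  fixes y th0 :: real and p0 and lik and eta :: "nat \<Rightarrow> real"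
  assumes S: "S \<in> sets borel"
  shows "emeasure (sgld_output p0 lik eta th0 1 [y]) S =
         emeasure (density lborel std_normal_density) {x. sgld_step p0 lik 1 (eta 0) y x th0 \<in> S}"
proof -
  define N where "N = density lborel std_normal_density"
  define P where "P = PiM {..<1::nat} (\<lambda>_. N)"
  define G where "G = (\<lambda>x. sgld_step p0 lik 1 (eta 0) y x th0)"
  have Nprob: "prob_space N" unfolding N_def using prob_space_normal_density by simp
  have Pprob: "prob_space P" unfolding P_def using Nprob by (intro prob_space_PiM) auto
  have sN: "sets N = sets borel" unfolding N_def by simp
  have Gm: "G \<in> borel_measurable borel" unfolding G_def sgld_step_def by measurable
  have perm: "{sh. sh permutes {..<1::nat}} = {id}"
    using permutes_sing[of _ "0::nat"] by (auto simp: lessThan_Suc)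
  have R: "measure_pmf (pmf_of_set {sh. sh permutes {..<length [y]}}) = measure_pmf (return_pmf id)"
    using perm by (simp add: pmf_of_set_singleton)
  define F where "F = (\<lambda>(sh::nat\<Rightarrow>nat, xi::nat \<Rightarrow> real). sgld_iter p0 lik eta th0 [y] sh xi 1)"
  have F_eq: "F = (\<lambda>p. (\<lambda>k xi. sgld_step p0 lik 1 (eta 0) ([y] ! k) (xi 0) th0) (fst p 0) (snd p))"
    unfolding F_def by (auto simp: fun_eq_iff)
  have m1: "(\<lambda>x. sgld_step p0 lik 1 (eta 0) ([y] ! k) (snd x 0) th0) \<in> borel_measurable (measure_pmf (return_pmf id) \<Otimes>\<^sub>M P)" for k
  proof -
    have a: "(\<lambda>x. snd x 0) \<in> measurable (measure_pmf (return_pmf id) \<Otimes>\<^sub>M P) N"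
      by (rule measurable_compose[OF measurable_snd]) (auto simp: P_def intro: measurable_component_singleton)
    have b: "(\<lambda>x. sgld_step p0 lik 1 (eta 0) ([y] ! k) x th0) \<in> measurable N borel"
      unfolding N_def sgld_step_def by measurable
    show ?thesis using measurable_compose[OF a b] by simp
  qed
  have m2: "(\<lambda>x. fst x 0) \<in> measurable (measure_pmf (return_pmf id) \<Otimes>\<^sub>M P) (count_space UNIV)"
    by (rule measurable_compose[OF measurable_fst]) simp
  have Fm: "F \<in> measurable (measure_pmf (return_pmf id) \<Otimes>\<^sub>M P) borel"
    unfolding F_eq using measurable_compose_countable[OF m1 m2] by simp
  have "emeasure (sgld_output p0 lik eta th0 1 [y]) S = emeasure (measure_pmf (return_pmf id) \<Otimes>\<^sub>M P) (F -` S \<inter> space (measure_pmf (return_pmf id) \<Otimes>\<^sub>M P))"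
    unfolding sgld_output_def R F_def[symmetric] P_def[symmetric] N_def[symmetric]
    using Fm S by (simp add: emeasure_distr)
  also have "\<dots> = emeasure P (Pair id -` (F -` S \<inter> space (measure_pmf (return_pmf id) \<Otimes>\<^sub>M P)))"
  proof -
    have sf: "sigma_finite_measure P" using Pprob by (simp add: prob_space_imp_sigma_finite)
    have X: "F -` S \<inter> space (measure_pmf (return_pmf id) \<Otimes>\<^sub>M P) \<in> sets (measure_pmf (return_pmf id) \<Otimes>\<^sub>M P)"
      using Fm S by (rule measurable_sets)
    show ?thesis
      by (subst sigma_finite_measure.emeasure_pair_measure_alt[OF sf X]) simp
  qed
  also have "\<dots> = emeasure P ((\<lambda>xi. xi 0) -` {x. G x \<in> S} \<inter> space P)"
    by (rule arg_cong[where f="emeasure P"]) (auto simp: F_def G_def space_pair_measure)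
  also have "\<dots> = emeasure (distr P N (\<lambda>xi. xi 0)) {x. G x \<in> S}"
    using Gm S by (subst emeasure_distr) (auto simp: P_def sN)
  also have "distr P N (\<lambda>xi. xi 0) = N"
    unfolding P_def using Nprob by (intro distr_PiM_component) auto
  finally show ?thesis unfolding N_def G_def .
qed

lemma cheb:
  assumes a: "0 < a"
  shows "measure (density lborel std_normal_density) {x. a \<le> \<bar>x\<bar>} \<le> 1 / a^2"
proof -
  define N where "N = density lborel std_normal_density"
  have int2: "has_bochner_integral lborel (\<lambda>x. std_normal_density x * x ^ 2) 1"
    using std_normal_moment_even[of 1] by simp
  have i1: "integrable N (\<lambda>x. x^2)"
    unfolding N_def using int2
    by (subst integrable_density) (auto simp: has_bochner_integral_iff)
  have i2: "(\<integral>x. x^2 \<partial>N) = 1"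
    unfolding N_def using int2
    by (subst integral_density) (auto simp: has_bochner_integral_iff)
  have "measure N {x\<in>space N. x^2 \<ge> a^2} \<le> (\<integral>x. x^2 \<partial>N) / a^2"
    by (rule integral_Markov_inequality_measure[OF i1, where A="space N"]) (use a in auto)
  moreover have "{x\<in>space N. x^2 \<ge> a^2} = {x. a \<le> \<bar>x\<bar>}"
    unfolding N_def using a
    by (auto simp: abs_le_square_iff[symmetric])
  ultimately show ?thesis using i2 by (simp add: N_def)
qed

definition lk :: "real \<Rightarrow> real \<Rightarrow> real \<Rightarrow> real" where
  "lk s y \<theta> = exp (y * s * sin \<theta>)"

lemma lk_le:
  assumes "0 < s" "y \<in> {0,1}" "w \<in> {0,1}"
  shows "lk s y \<theta> \<le> exp s * lk s w \<theta>"
proof -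
  have h1: "s * sin \<theta> \<le> s" using mult_left_mono[of "sin \<theta>" 1 s] assms(1) by simp
  have h2: "- s \<le> s * sin \<theta>" using mult_left_mono[of "-1" "sin \<theta>" s] assms(1) by simp
  have "y * s * sin \<theta> \<le> s + w * s * sin \<theta>"
    using assms h1 h2 by auto
  then show ?thesis unfolding lk_def by (simp add: exp_add[symmetric])
qed

definition Zs :: "real \<Rightarrow> real \<Rightarrow> ennreal" where
  "Zs s y = (\<integral>\<^sup>+ t. ennreal (post_unnorm std_normal_density (lk s) [y] t) \<partial>lborel)"

lemma pu: "post_unnorm std_normal_density (lk s) [y] t = std_normal_density t * lk s y t"
  by (simp add: post_unnorm_def)

lemma Zs_le:
  assumes "0 < s" "y \<in> {0,1}" "w \<in> {0,1}"
  shows "Zs s y \<le> ennreal (exp s) * Zs s w"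
proof -
  have "Zs s y \<le> (\<integral>\<^sup>+ t. ennreal (exp s) * ennreal (std_normal_density t * lk s w t) \<partial>lborel)"
    unfolding Zs_def pu
  proof (intro nn_integral_mono)
    fix t
    have "std_normal_density t * lk s y t \<le> std_normal_density t * (exp s * lk s w t)"
      by (intro mult_left_mono lk_le[OF assms]) auto
    then show "ennreal (std_normal_density t * lk s y t) \<le> ennreal (exp s) * ennreal (std_normal_density t * lk s w t)"
      by (subst ennreal_mult[symmetric]) (auto simp: lk_def mult_ac intro!: ennreal_leI)
  qed
  also have "\<dots> = ennreal (exp s) * Zs s w"
    unfolding Zs_def pu by (rule nn_integral_cmult) (simp add: lk_def)
  finally show ?thesis .
qed

lemma Zs0: "Zs s 0 = 1"
proof -
  have "Zs s 0 = (\<integral>\<^sup>+ t. ennreal (std_normal_density t) \<partial>lborel)"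
    unfolding Zs_def pu by (simp add: lk_def)
  also have "\<dots> = 1"
    by (subst nn_integral_eq_integral) auto
  finally show ?thesis .
qed

lemma Zs_real:
  assumes "0 < s" "y \<in> {0,1}"
  shows "\<exists>z. Zs s y = ennreal z \<and> exp (-s) \<le> z \<and> z \<le> exp s"
proof -
  have u: "Zs s y \<le> ennreal (exp s)" using Zs_le[OF assms(1,2), of 0] by (simp add: Zs0)
  have l: "1 \<le> ennreal (exp s) * Zs s y" using Zs_le[OF assms(1) _ assms(2), of 0] by (simp add: Zs0)
  have "Zs s y \<noteq> \<top>" using u by (auto simp: top_unique)
  then obtain z where z: "Zs s y = ennreal z" "0 \<le> z" by (cases "Zs s y") auto
  have "z \<le> exp s" using u z by simp
  moreover have "1 \<le> exp s * z" using l z by (simp add: ennreal_mult[symmetric])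
  then have "exp (-s) \<le> z" by (simp add: exp_minus field_simps mult.commute)
  ultimately show ?thesis using z by blast
qed


lemma lk_pos: "0 < lk s y t" by (simp add: lk_def)

lemma post_eq:
  assumes "Zs s y = ennreal z" "0 < z"
  shows "posterior std_normal_density (lk s) [y] =
           density lborel (\<lambda>\<theta>. ennreal (std_normal_density \<theta> * lk s y \<theta> / z))"
proof -
  have "posterior std_normal_density (lk s) [y] =
           density lborel (\<lambda>\<theta>. ennreal (std_normal_density \<theta> * lk s y \<theta>) / ennreal z)"
    unfolding posterior_def using assms(1) unfolding Zs_def pu by simp
  also have "\<dots> = density lborel (\<lambda>\<theta>. ennreal (std_normal_density \<theta> * lk s y \<theta> / z))"
    using assms(2) by (subst divide_ennreal) (auto intro!: mult_nonneg_nonneg less_imp_le[OF lk_pos])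
  finally show ?thesis .
qed

lemma post_prob:
  assumes "0 < s" "y \<in> {0,1}"
  shows "prob_space (posterior std_normal_density (lk s) [y])"
proof -
  obtain z where z: "Zs s y = ennreal z" "exp (-s) \<le> z" "z \<le> exp s" using Zs_real[OF assms] by blast
  have zp: "0 < z" using z(2) exp_gt_zero[of "-s"] by linarith
  show ?thesis
  proof (rule prob_spaceI)
    have "emeasure (posterior std_normal_density (lk s) [y]) (space (posterior std_normal_density (lk s) [y]))
       = (\<integral>\<^sup>+ t. ennreal (std_normal_density t * lk s y t) / Zs s y \<partial>lborel)"
      unfolding posterior_def Zs_def[symmetric] pu
      by (subst emeasure_density) (auto simp: lk_def Zs_def pu)
    also have "\<dots> = Zs s y / Zs s y"
      by (subst nn_integral_divide) (auto simp: Zs_def pu lk_def)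
    also have "\<dots> = 1" using z zp by simp
    finally show "emeasure (posterior std_normal_density (lk s) [y]) (space (posterior std_normal_density (lk s) [y])) = 1" .
  qed
qed

lemma post_dp:
  assumes "0 < s" "y \<in> {0,1}" "w \<in> {0,1}" "S \<in> sets borel"
  shows "measure (posterior std_normal_density (lk s) [y]) S
           \<le> exp (2 * s) * measure (posterior std_normal_density (lk s) [w]) S"
proof -
  obtain z where z: "Zs s y = ennreal z" "exp (-s) \<le> z" "z \<le> exp s" using Zs_real[OF assms(1,2)] by blast
  obtain z' where z': "Zs s w = ennreal z'" "exp (-s) \<le> z'" "z' \<le> exp s" using Zs_real[OF assms(1,3)] by blast
  have zp: "0 < z" using z(2) exp_gt_zero[of "-s"] by linarith
  have zp': "0 < z'" using z'(2) exp_gt_zero[of "-s"] by linarith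
  have "ennreal z' \<le> ennreal (exp s * z)"
  proof -
    have "ennreal (exp s * z) = ennreal (exp s) * ennreal z" by (rule ennreal_mult) (use zp in auto)
    then show ?thesis using Zs_le[OF assms(1,3,2)] z(1) z'(1) by simp
  qed
  then have zz: "z' \<le> exp s * z" using zp by (subst (asm) ennreal_le_iff) auto
  have pw: "std_normal_density t * lk s y t / z \<le> exp (2 * s) * (std_normal_density t * lk s w t / z')" for t
  proof -
    define p where "p = std_normal_density t"
    have pp: "0 < p" unfolding p_def by (simp add: normal_density_pos)
    have l: "lk s y t \<le> exp s * lk s w t" by (rule lk_le[OF assms(1-3)])
    have l0: "0 < lk s w t" by (rule lk_pos)
    have "p * lk s y t / z \<le> p * (exp s * lk s w t) / z"
    proof -
      have "p * lk s y t \<le> p * (exp s * lk s w t)" using mult_left_mono[OF l] pp by simp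
      then show ?thesis using zp by (rule divide_right_mono[OF _ less_imp_le])
    qed
    also have "\<dots> = exp s * (p * lk s w t) / z" by simp
    also have "\<dots> \<le> exp s * (p * lk s w t) * exp s / z'"
    proof -
      have "1 / z \<le> exp s / z'" using zz zp zp' by (simp add: field_simps)
      then have "exp s * (p * lk s w t) * (1 / z) \<le> exp s * (p * lk s w t) * (exp s / z')"
        using pp l0 by (intro mult_left_mono) auto
      then show ?thesis by simp
    qed
    also have "\<dots> = exp (2 * s) * (p * lk s w t / z')"
    proof -
      have e: "exp (2 * s) = exp s * exp s" by (metis exp_add mult_2)
      show ?thesis unfolding e using zp' by (simp add: field_simps)
    qed
    finally show ?thesis unfolding p_def .
  qed
  have P: "prob_space (posterior std_normal_density (lk s) [y])" by (rule post_prob[OF assms(1,2)])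
  have P': "prob_space (posterior std_normal_density (lk s) [w])" by (rule post_prob[OF assms(1,3)])
  have "emeasure (posterior std_normal_density (lk s) [y]) S
      = (\<integral>\<^sup>+ t. ennreal (std_normal_density t * lk s y t / z) * indicator S t \<partial>lborel)"
    unfolding post_eq[OF z(1) zp] using assms(4) by (subst emeasure_density) (auto simp: lk_def)
  also have "\<dots> \<le> (\<integral>\<^sup>+ t. ennreal (exp (2 * s)) * (ennreal (std_normal_density t * lk s w t / z') * indicator S t) \<partial>lborel)"
  proof (rule nn_integral_mono)
    fix t
    have "ennreal (std_normal_density t * lk s y t / z) \<le> ennreal (exp (2 * s) * (std_normal_density t * lk s w t / z'))"
      using pw by (rule ennreal_leI)
    also have "\<dots> = ennreal (exp (2 * s)) * ennreal (std_normal_density t * lk s w t / z')"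
      by (rule ennreal_mult) (use zp' lk_pos[of s w t] in auto)
    finally show "ennreal (std_normal_density t * lk s y t / z) * indicator S t \<le> ennreal (exp (2 * s)) * (ennreal (std_normal_density t * lk s w t / z') * indicator S t)"
      by (cases "t \<in> S") auto
  qed
  also have "\<dots> = ennreal (exp (2 * s)) * emeasure (posterior std_normal_density (lk s) [w]) S"
    unfolding post_eq[OF z'(1) zp'] using assms(4)
    by (subst emeasure_density) (auto intro!: nn_integral_cmult simp: lk_def)
  finally have "ennreal (measure (posterior std_normal_density (lk s) [y]) S)
     \<le> ennreal (exp (2 * s) * measure (posterior std_normal_density (lk s) [w]) S)"
    using finite_measure.emeasure_eq_measure[OF prob_space.axioms(1)[OF P]] finite_measure.emeasure_eq_measure[OF prob_space.axioms(1)[OF P']]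
    by (simp add: ennreal_mult)
  then show ?thesis by (subst (asm) ennreal_le_iff) auto
qed


lemma bayes_ok:
  assumes "0 < s"
  shows "bayes_problem std_normal_density (lk s)"
proof -
  have c: "0 < 1 / sqrt (2 * pi)" by simp
  have lnstd: "(\<lambda>t. ln (std_normal_density t)) = (\<lambda>t. ln (1 / sqrt (2 * pi)) + (- t\<^sup>2 / 2))"
  proof
    fix t
    show "ln (std_normal_density t) = ln (1 / sqrt (2 * pi)) + (- t\<^sup>2 / 2)"
      unfolding std_normal_density_def using c by (subst ln_mult) auto
  qed
  have d1: "(\<lambda>t. ln (std_normal_density t)) differentiable at \<theta>" for \<theta>
    unfolding lnstd real_differentiable_def
    by (rule exI, auto intro!: derivative_eq_intros)
  have lnlk: "(\<lambda>t. ln (lk s y t)) = (\<lambda>t. y * s * sin t)" for y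
    by (simp add: lk_def)
  have d2: "(\<lambda>t. ln (lk s y t)) differentiable at \<theta>" for y \<theta>
    unfolding lnlk real_differentiable_def
    by (rule exI, auto intro!: derivative_eq_intros)
  have nu: "sets (return borel (0::real)) = sets borel \<and>
        (\<forall>\<theta>. (\<lambda>y. lk s y \<theta>) \<in> borel_measurable (return borel 0) \<and>
              (\<integral>\<^sup>+ y. ennreal (lk s y \<theta>) \<partial>return borel 0) = 1)"
  proof (intro conjI allI)
    show "sets (return borel (0::real)) = sets borel" by simp
    fix \<theta>
    show m: "(\<lambda>y. lk s y \<theta>) \<in> borel_measurable (return borel (0::real))"
      by (subst measurable_cong_sets[OF sets_return refl]) (simp add: lk_def)
    show "(\<integral>\<^sup>+ y. ennreal (lk s y \<theta>) \<partial>return borel 0) = 1"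
      by (subst nn_integral_return) (auto simp: lk_def)
  qed
  have int1: "(\<integral>\<^sup>+ \<theta>. ennreal (std_normal_density \<theta>) \<partial>lborel) = 1"
    by (subst nn_integral_eq_integral) auto
  have mlk: "(\<lambda>t. lk s y t) \<in> borel_measurable borel" for y
    unfolding lk_def by measurable
  show ?thesis
    unfolding bayes_problem_def
    using d1 d2 nu int1 mlk
    by (auto simp: normal_density_pos lk_pos intro!: exI[of _ "return borel 0"])
qed


theorem theorem1:
  fixes \<delta> \<epsilon> \<epsilon>' :: real
  assumes "0 < \<delta>" and "\<delta> < 0.5" and "0 < \<epsilon>" and "0 < \<epsilon>'"
  shows "\<exists>(Dom :: real list set) p0 lik.
           bayes_problem p0 lik \<and>
           (\<forall>D\<in>Dom. prob_space (posterior p0 lik D)) \<and>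
           diff_private \<epsilon> \<delta> Dom (posterior p0 lik) \<and>
           (\<exists>(eta :: nat \<Rightarrow> real) th0 T. (\<forall>j. 0 < eta j) \<and>
              (\<forall>\<epsilon>''. \<epsilon>'' < \<epsilon>' \<longrightarrow>
                 \<not> diff_private \<epsilon>'' \<delta> Dom (sgld_output p0 lik eta th0 T)))"
proof -
  define s where "s = \<epsilon> / 2"
  have s: "0 < s" using assms(3) by (simp add: s_def)
  define Dom :: "real list set" where "Dom = {[0], [1]}"
  define a where "a = 2 * (1 + exp \<epsilon>')"
  have a: "1 \<le> a" unfolding a_def using exp_gt_zero[of \<epsilon>'] by (simp add: algebra_simps)
  define r where "r = 4 * a / s"
  have r: "0 < r" using a s by (simp add: r_def)
  have rs: "r * s = 4 * a" using s by (simp add: r_def)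
  define E where "E = r^2"
  have sE: "sqrt E = r" using r by (simp add: E_def)
  have Ep: "0 < E" using r by (simp add: E_def)
  define N where "N = density lborel std_normal_density"
  have Nprob: "prob_space N" unfolding N_def using prob_space_normal_density by simp
  define c0 where "c0 = deriv (\<lambda>t. ln (std_normal_density t)) 0"
  have dlk: "deriv (\<lambda>t. ln (lk s y t)) 0 = y * s" for y
  proof -
    have "((\<lambda>t. y * s * sin t) has_real_derivative (y * s * cos 0)) (at 0)"
      by (auto intro!: derivative_eq_intros)
    then have "deriv (\<lambda>t. y * s * sin t) 0 = y * s" by (simp add: DERIV_imp_deriv)
    then show ?thesis by (simp add: lk_def)
  qed
  have G: "sgld_step std_normal_density (lk s) 1 E y x 0 = E / 2 * c0 + r * (2 * a * y) + r * x" for y x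
  proof -
    have "E / 2 * (y * s) = r * (2 * a * y)"
      unfolding E_def power2_eq_square using rs by (simp add: algebra_simps)
    then show ?thesis
      unfolding sgld_step_def dlk c0_def[symmetric] sE by (simp add: algebra_simps)
  qed
  define m where "m = E / 2 * c0 + r * a"
  define S where "S = {m..}"
  have Sb: "S \<in> sets borel" by (simp add: S_def)
  have set1: "{x. sgld_step std_normal_density (lk s) 1 E 1 x 0 \<in> S} = {x. - a \<le> x}"
  proof -
    have e1: "r * (2 * a * 1) = 2 * (r * a)" "r * (- a) = - (r * a)" by simp_all
    have i1: "m \<le> E / 2 * c0 + r * (2 * a * 1) + r * x \<longleftrightarrow> r * (- a) \<le> r * x" for x
      unfolding m_def e1 by linarith
    have i2: "r * (- a) \<le> r * x \<longleftrightarrow> - a \<le> x" for x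
      by (rule mult_le_cancel_left_pos[OF r])
    show ?thesis unfolding S_def G atLeast_iff i1 i2 ..
  qed
  have set0: "{x. sgld_step std_normal_density (lk s) 1 E 0 x 0 \<in> S} = {x. a \<le> x}"
  proof -
    have i1: "m \<le> E / 2 * c0 + r * (2 * a * 0) + r * x \<longleftrightarrow> r * a \<le> r * x" for x
      unfolding m_def by linarith
    have i2: "r * a \<le> r * x \<longleftrightarrow> a \<le> x" for x
      by (rule mult_le_cancel_left_pos[OF r])
    show ?thesis unfolding S_def G atLeast_iff i1 i2 ..
  qed
  define q where "q = measure N {x. a \<le> \<bar>x\<bar>}"
  have q: "q \<le> 1 / a^2" unfolding q_def N_def using a by (intro cheb) auto
  have out: "measure (sgld_output std_normal_density (lk s) (\<lambda>_. E) 0 1 [y]) S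
       = measure N {x. sgld_step std_normal_density (lk s) 1 E y x 0 \<in> S}" for y
    unfolding measure_def N_def using sgld_out_single[OF Sb, of std_normal_density "lk s" "\<lambda>_. E" 0 y]
    by simp
  have P1: "1 - q \<le> measure (sgld_output std_normal_density (lk s) (\<lambda>_. E) 0 1 [1]) S"
  proof -
    have "measure N (space N - {x. x < - a}) = 1 - measure N {x. x < - a}"
      using Nprob by (intro prob_space.prob_compl) (auto simp: N_def)
    moreover have "space N - {x. x < - a} = {x. - a \<le> x}" by (auto simp: N_def)
    moreover have "measure N {x. x < - a} \<le> q"
      unfolding q_def
      by (intro finite_measure.finite_measure_mono[OF prob_space.axioms(1)[OF Nprob]]) (auto simp: N_def)
    ultimately show ?thesis unfolding out set1 by simp
  qed
  have P0: "measure (sgld_output std_normal_density (lk s) (\<lambda>_. E) 0 1 [0]) S \<le> q"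
    unfolding out set0 q_def using a
    by (intro finite_measure.finite_measure_mono[OF prob_space.axioms(1)[OF Nprob]]) (auto simp: N_def)
  have P0n: "0 \<le> measure (sgld_output std_normal_density (lk s) (\<lambda>_. E) 0 1 [0]) S" by simp
  have key: "(1 + exp \<epsilon>') * q < 1 - \<delta>"
  proof -
    have "(1 + exp \<epsilon>') * q \<le> (1 + exp \<epsilon>') * (1 / a^2)"
      using q by (intro mult_left_mono) (auto intro: add_nonneg_nonneg less_imp_le)
    also have "\<dots> = 1 / (4 * (1 + exp \<epsilon>'))"
    proof -
      have gen: "b * (1 / (2 * b)^2) = 1 / (4 * b)" if "0 < b" for b :: real
        using that by (simp add: power2_eq_square field_simps)
      show ?thesis unfolding a_def by (rule gen) (simp add: add_pos_pos)
    qed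
    also have "\<dots> \<le> 1 / 4"
      using exp_gt_zero[of \<epsilon>'] by (intro divide_left_mono) (auto intro: mult_pos_pos add_pos_pos)
    also have "\<dots> < 1 - \<delta>" using assms(2) by simp
    finally show ?thesis .
  qed
  have nb: "neighbouring [1::real] [0]"
  proof -
    have "{i. i < length [1::real] \<and> [1::real] ! i \<noteq> [0] ! i} \<subseteq> {0}" by auto
    then have "card {i. i < length [1::real] \<and> [1::real] ! i \<noteq> [0] ! i} \<le> card {0::nat}"
      by (intro card_mono) auto
    then show ?thesis unfolding neighbouring_def by simp
  qed
  have notdp: "\<not> diff_private \<epsilon>'' \<delta> Dom (sgld_output std_normal_density (lk s) (\<lambda>_. E) 0 1)"
    if e: "\<epsilon>'' < \<epsilon>'" for \<epsilon>''
  proof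
    assume "diff_private \<epsilon>'' \<delta> Dom (sgld_output std_normal_density (lk s) (\<lambda>_. E) 0 1)"
    then have h: "measure (sgld_output std_normal_density (lk s) (\<lambda>_. E) 0 1 [1]) S
        \<le> exp \<epsilon>'' * measure (sgld_output std_normal_density (lk s) (\<lambda>_. E) 0 1 [0]) S + \<delta>"
      unfolding diff_private_def Dom_def using nb Sb by blast
    have "exp \<epsilon>'' * measure (sgld_output std_normal_density (lk s) (\<lambda>_. E) 0 1 [0]) S \<le> exp \<epsilon>' * q"
      using P0 P0n e by (intro mult_mono) auto
    then show False using h P1 key by (simp add: algebra_simps)
  qed
  have post: "\<forall>D\<in>Dom. prob_space (posterior std_normal_density (lk s) D)"
    unfolding Dom_def using post_prob[OF s] by auto
  have dp: "diff_private \<epsilon> \<delta> Dom (posterior std_normal_density (lk s))"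
    unfolding diff_private_def
  proof (intro ballI impI)
    fix D D' and S :: "real set" assume D: "D \<in> Dom" and D': "D' \<in> Dom" and S: "S \<in> sets borel"
    obtain y where y: "y \<in> {0,1}" "D = [y]" using D unfolding Dom_def by auto
    obtain w where w: "w \<in> {0,1}" "D' = [w]" using D' unfolding Dom_def by auto
    have "measure (posterior std_normal_density (lk s) D) S \<le> exp \<epsilon> * measure (posterior std_normal_density (lk s) D') S"
      using post_dp[OF s y(1) w(1) S] unfolding y(2) w(2) s_def by simp
    then show "measure (posterior std_normal_density (lk s) D) S \<le> exp \<epsilon> * measure (posterior std_normal_density (lk s) D') S + \<delta>"
      using assms(1) by linarith
  qed
  show ?thesis
    using bayes_ok[OF s] post dp notdp Ep
    by (intro exI[of _ Dom] exI[of _ std_normal_density] exI[of _ "lk s"]) (auto intro!: exI[of _ "\<lambda>_. E"] exI[of _ 0] exI[of _ "1::nat"])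
qed

end
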